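(* Let $\bar u\in\mathbb{R}^n_{\ge 0}$, $\mathcal{X}=[0,\bar u]$, and let $f:\mathcal{X}\to\mathbb{R}$ be differentiable, nonnegative, DR-submodular and $\mu$-strongly DR-submodular for some $\mu\ge0$. Let $\mathcal{P}\subseteq\mathcal{X}$ be a nonempty compact convex down-closed set and let $x^*\in\arg\max_{x\in\mathcal{P}}f(x)$. Let $x\in\mathcal{P}$, let $\mathcal{Q}:=\{y\in\mathcal{P}: y\le \bar u-x\}$, and let $z\in\mathcal{Q}$. Define $z^*:=x\vee x^*-x$. Then $$\max\{f(x),f(z)\}\;\ge\;\frac14\big[f(x^* )-g_{\mathcal{P}}(x)-g_{\mathcal{Q}}(z)\big]+\frac{\mu}{8}\big(\|x-x^*\|^2+\|z-z^*\|^2\big).$$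
   Context: Vector inequalities are componentwise; $\vee,\wedge$ are coordinatewise max/min; $\|\cdot\|$ is the Euclidean norm. A set $\mathcal{P}\subseteq[0,\bar u]$ is down-closed if $x\in\mathcal{P}$ and $0\le y\le x$ imply $y\in\mathcal{P}$. DR-submodular: for all $a\le b$ in $\mathcal{X}$, $i\in[n]$, $k\ge0$ with $a+ke_i,b+ke_i\in\mathcal{X}$, $f(a+ke_i)-f(a)\ge f(b+ke_i)-f(b)$. $\mu$-strongly DR-submodular: for all $x\in\mathcal{X}$ and $v\in\mathbb{R}^n_{\ge0}\cup(-\mathbb{R}^n_{\ge0})$ with $x+v\in\mathcal{X}$, $f(x+v)\le f(x)+\langle\nabla f(x),v\rangle-\frac{\mu}{2}\|v\|^2$. For a compact set $\mathcal{C}\subseteq\mathcal{X}$ and $w\in\mathcal{C}$, the non-stationarity is $g_{\mathcal{C}}(w):=\max_{v\in\mathcal{C}}\langle v-w,\nabla f(w)\rangle$. *)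

theory Defs
  imports "HOL-Analysis.Analysis"
begin

(* Vectors in R^n are rendered as real^'n; \<le> on real^'n is componentwise,
   sup/inf are coordinatewise max/min, norm is Euclidean. *)

definition down_closed :: "(real^'n) set \<Rightarrow> bool" where
  "down_closed P \<longleftrightarrow> (\<forall>x\<in>P. \<forall>y. 0 \<le> y \<and> y \<le> x \<longrightarrow> y \<in> P)"

definition DR_submodular :: "(real^'n) set \<Rightarrow> (real^'n \<Rightarrow> real) \<Rightarrow> bool" where
  "DR_submodular X f \<longleftrightarrow>
     (\<forall>a\<in>X. \<forall>b\<in>X. \<forall>i. \<forall>k::real. a \<le> b \<and> k \<ge> 0 \<and>
        a + k *\<^sub>R axis i 1 \<in> X \<and> b + k *\<^sub>R axis i 1 \<in> X \<longrightarrow>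
        f (a + k *\<^sub>R axis i 1) - f a \<ge> f (b + k *\<^sub>R axis i 1) - f b)"

(* grad is the gradient \<nabla>f *)
definition strongly_DR_submodular ::
  "real \<Rightarrow> (real^'n) set \<Rightarrow> (real^'n \<Rightarrow> real) \<Rightarrow> (real^'n \<Rightarrow> real^'n) \<Rightarrow> bool" where
  "strongly_DR_submodular \<mu> X f grad \<longleftrightarrow>
     (\<forall>x\<in>X. \<forall>v. (0 \<le> v \<or> v \<le> 0) \<and> x + v \<in> X \<longrightarrow>
        f (x + v) \<le> f x + inner (grad x) v - \<mu> / 2 * (norm v)\<^sup>2)"

definition nonstat :: "(real^'n \<Rightarrow> real^'n) \<Rightarrow> (real^'n) set \<Rightarrow> real^'n \<Rightarrow> real" where
  "nonstat grad C w = (SUP v\<in>C. inner (v - w) (grad w))"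

end

theory Submission
  imports Defs
begin

lemma DR_vec:
  fixes f :: "real^'n \<Rightarrow> real"
  assumes DR: "DR_submodular {0..u} f" and ab: "a \<le> b" and v0: "0 \<le> v"
    and a0: "0 \<le> a" and bu: "b + v \<le> u"
  shows "f (b+v) - f b \<le> f (a+v) - f a"
proof -
  define vS where "vS S = (\<chi> i. if i \<in> S then v$i else 0)" for S :: "'n set"
  have mem: "p \<in> {0..u}" if "a \<le> p" "p \<le> b + v" for p
    using that a0 bu by (auto simp: less_eq_vec_def intro: order_trans)
  have "finite S \<Longrightarrow> f (b + vS S) - f b \<le> f (a + vS S) - f a" for S
  proof (induction S rule: finite_induct)
    case empty
    have "vS {} = 0" by (simp add: vS_def vec_eq_iff)
    then show ?case by simp
  next
    case (insert i S)
    have eq: "vS (insert i S) = vS S + (v$i) *\<^sub>R axis i 1"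
      using insert by (auto simp: vS_def vec_eq_iff axis_def)
    let ?a = "a + vS S" and ?b = "b + vS S" and ?e = "(v$i) *\<^sub>R axis i (1::real)"
    have le1: "a \<le> ?a" "?a \<le> ?b" "a \<le> ?b" "a \<le> ?a + ?e" "a \<le> ?b + ?e"
      "?b \<le> b + v" "?a \<le> b + v" "?a + ?e \<le> b + v" "?b + ?e \<le> b + v"
      using ab v0 insert(2) by (auto simp: less_eq_vec_def vS_def axis_def intro: add_increasing2)
    have "f (?b + ?e) - f ?b \<le> f (?a + ?e) - f ?a"
      apply (rule DR[unfolded DR_submodular_def, rule_format, of ?a ?b "v$i" i])
      using le1 v0 v0[unfolded less_eq_vec_def] by (auto intro!: mem simp del: atLeastAtMost_iff)
    then show ?case using insert(3) by (simp add: eq add.assoc)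
  qed
  moreover have "vS UNIV = v" by (simp add: vS_def vec_eq_iff)
  ultimately show ?thesis by (metis finite)
qed

lemma key:
  fixes f :: "real^'n \<Rightarrow> real"
  assumes strong: "strongly_DR_submodular \<mu> {0..u} f grad"
    and p: "p \<in> {0..u}" and y: "y \<in> {0..u}"
  shows "f (sup p y) + f (inf p y) \<le> 2 * f p + inner (grad p) (y - p) - \<mu>/2 * (norm (p - y))\<^sup>2"
proof -
  define v1 where "v1 = sup p y - p"
  define v2 where "v2 = inf p y - p"
  have s1: "0 \<le> v1" "p + v1 \<in> {0..u}" using p y
    by (auto simp: v1_def less_eq_vec_def sup_vec_def le_supI1)
  have s2: "v2 \<le> 0" "p + v2 \<in> {0..u}" using p y
    by (auto simp: v2_def less_eq_vec_def inf_vec_def le_infI1)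
  have e1: "f (sup p y) \<le> f p + inner (grad p) v1 - \<mu>/2 * (norm v1)\<^sup>2"
    using strong s1 unfolding strongly_DR_submodular_def v1_def using p by (metis add.commute diff_add_cancel)
  have e2: "f (inf p y) \<le> f p + inner (grad p) v2 - \<mu>/2 * (norm v2)\<^sup>2"
    using strong s2 unfolding strongly_DR_submodular_def v2_def using p by (metis add.commute diff_add_cancel)
  have sum: "v1 + v2 = y - p" by (simp add: v1_def v2_def vec_eq_iff sup_vec_def inf_vec_def sup_max inf_min max_def min_def)
  have orth: "inner v1 v2 = 0"
    by (auto simp: inner_vec_def v1_def v2_def sup_vec_def inf_vec_def sup_max inf_min max_def min_def intro!: sum.neutral)
  have "(norm (p - y))\<^sup>2 = (norm v1)\<^sup>2 + (norm v2)\<^sup>2"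
  proof -
    have "(norm (p - y))\<^sup>2 = (norm (v1 + v2))\<^sup>2" by (simp add: sum norm_minus_commute)
    also have "\<dots> = (norm v1)\<^sup>2 + (norm v2)\<^sup>2"
      by (simp add: power2_norm_eq_inner inner_add_left inner_add_right orth inner_commute[of v2 v1])
    finally show ?thesis .
  qed
  moreover have "inner (grad p) (y - p) = inner (grad p) v1 + inner (grad p) v2"
    by (simp add: sum[symmetric] inner_add_right)
  ultimately show ?thesis using e1 e2 by (simp add: algebra_simps)
qed

lemma nonstat_ge:
  fixes grad :: "real^'n \<Rightarrow> real^'n"
  assumes C: "compact C" and v: "v \<in> C"
  shows "inner (v - w) (grad w) \<le> nonstat grad C w"
  unfolding nonstat_def
proof (rule cSUP_upper[OF v])
  have "compact ((\<lambda>v. inner (v - w) (grad w)) ` C)"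
    by (intro compact_continuous_image C continuous_intros)
  then show "bdd_above ((\<lambda>v. inner (v - w) (grad w)) ` C)"
    by (intro bounded_imp_bdd_above compact_imp_bounded)
qed

theorem proposition1:
  fixes ubar :: "real^'n"
    and f :: "real^'n \<Rightarrow> real"
    and grad :: "real^'n \<Rightarrow> real^'n"
    and \<mu> :: real
    and P :: "(real^'n) set"
    and xstar x z :: "real^'n"
  assumes ubar_nonneg: "0 \<le> ubar"
    and diff: "\<forall>y\<in>{0..ubar}. (f has_derivative (\<lambda>v. inner (grad y) v)) (at y within {0..ubar})"
    and nonneg: "\<forall>y\<in>{0..ubar}. f y \<ge> 0"
    and DR: "DR_submodular {0..ubar} f"
    and mu_nonneg: "\<mu> \<ge> 0"
    and strong: "strongly_DR_submodular \<mu> {0..ubar} f grad"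
    and P_sub: "P \<subseteq> {0..ubar}"
    and P_ne: "P \<noteq> {}"
    and P_compact: "compact P"
    and P_convex: "convex P"
    and P_down: "down_closed P"
    and xstar_in: "xstar \<in> P"
    and xstar_max: "\<forall>y\<in>P. f y \<le> f xstar"
    and x_in: "x \<in> P"
    and z_in: "z \<in> {y\<in>P. y \<le> ubar - x}"
  shows "max (f x) (f z) \<ge>
           1/4 * (f xstar - nonstat grad P x - nonstat grad {y\<in>P. y \<le> ubar - x} z)
           + \<mu>/8 * ((norm (x - xstar))\<^sup>2 + (norm (z - (sup x xstar - x)))\<^sup>2)"
proof -
  let ?X = "{0..ubar}"
  let ?Q = "{y\<in>P. y \<le> ubar - x}"
  define zs where "zs = sup x xstar - x"
  define m where "m = inf x xstar"
  define w where "w = sup z zs"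
  have xX: "x \<in> ?X" and xsX: "xstar \<in> ?X" using x_in xstar_in P_sub by auto
  have zP: "z \<in> P" and zle: "z \<le> ubar - x" using z_in by auto
  have zX: "z \<in> ?X" using zP P_sub by auto
  have zs0: "0 \<le> zs" and zsx: "zs \<le> xstar" and zsu: "zs \<le> ubar - x"
    using xX xsX by (auto simp: zs_def less_eq_vec_def sup_vec_def sup_max max_def)
  have zsP: "zs \<in> P" using P_down xstar_in zs0 zsx unfolding down_closed_def by blast
  have zsQ: "zs \<in> ?Q" using zsP zsu by auto
  have zsX: "zs \<in> ?X" using zsP P_sub by auto
  have Qc: "compact ?Q"
  proof -
    have "?Q = P \<inter> {y. \<forall>i. y$i \<le> (ubar - x)$i}" by (auto simp: less_eq_vec_def)
    then show ?thesis using P_compact closed_interval_left_cart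
      by (metis (no_types) compact_Int_closed)
  qed
  have k1: "f (sup x xstar) + f m \<le> 2 * f x + inner (grad x) (xstar - x) - \<mu>/2 * (norm (x - xstar))\<^sup>2"
    using key[OF strong xX xsX] by (simp add: m_def)
  have k2: "f w + f (inf z zs) \<le> 2 * f z + inner (grad z) (zs - z) - \<mu>/2 * (norm (z - zs))\<^sup>2"
    using key[OF strong zX zsX] by (simp add: w_def)
  have g1: "inner (grad x) (xstar - x) \<le> nonstat grad P x"
    using nonstat_ge[OF P_compact xstar_in, of x grad] by (simp add: inner_commute)
  have g2: "inner (grad z) (zs - z) \<le> nonstat grad ?Q z"
    using nonstat_ge[OF Qc zsQ, of z grad] by (simp add: inner_commute)
  have "inf z zs \<in> ?X" using zX zsX
    by (auto simp: less_eq_vec_def inf_vec_def inf_min min.coboundedI1)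
  then have fizs: "f (inf z zs) \<ge> 0" using nonneg by blast
  have x0: "0 \<le> x" and xs0: "0 \<le> xstar" using xX xsX by auto
  have w0: "0 \<le> w" using zs0 by (auto simp: w_def less_eq_vec_def sup_vec_def sup_max le_max_iff_disj)
  have wu: "w \<le> ubar - x" using zle zsu by (auto simp: w_def less_eq_vec_def sup_vec_def sup_max)
  have wzs: "zs \<le> w" by (auto simp: w_def less_eq_vec_def sup_vec_def sup_max)
  have m0: "0 \<le> m" and mx: "m \<le> x" using x0 xs0 by (auto simp: m_def less_eq_vec_def inf_vec_def inf_min)
  have mzs: "m + zs = xstar" by (simp add: m_def zs_def vec_eq_iff sup_vec_def inf_vec_def sup_max inf_min max_def min_def)
  have xzs: "x + zs = sup x xstar" by (simp add: zs_def)
  have xw: "x + w \<le> ubar" using wu unfolding less_eq_vec_def by (metis le_diff_eq add.commute vector_add_component vector_minus_component)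
  have xwX: "x + w \<in> ?X" using xw x0 w0 by (auto simp: less_eq_vec_def add_nonneg_nonneg)
  have D1: "f (m + w) - f m \<le> f (0 + w) - f 0"
  proof -
    have "m + w \<le> ubar" using order_trans[OF add_right_mono[OF mx] xw] .
    then show ?thesis using DR_vec[OF DR m0 w0 order_refl] by simp
  qed
  have f0: "f 0 \<ge> 0" using nonneg ubar_nonneg by auto
  have D2: "f (x + zs + (w - zs)) - f (x + zs) \<le> f (m + zs + (w - zs)) - f (m + zs)"
  proof (rule DR_vec[OF DR])
    show "m + zs \<le> x + zs" using mx by (simp add: add_right_mono)
    show "0 \<le> w - zs" using wzs by simp
    show "0 \<le> m + zs" using m0 zs0 by (simp add: add_nonneg_nonneg)
    show "x + zs + (w - zs) \<le> ubar" using xw by simp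
  qed
  have fxw: "f (x + w) \<ge> 0" using nonneg xwX by auto
  have "f xstar \<le> f m + f w + f (sup x xstar)"
  proof -
    have e1: "m + zs + (w - zs) = m + w" and e2: "x + zs + (w - zs) = x + w" by simp_all
    have D2': "f (x + w) - f (sup x xstar) \<le> f (m + w) - f xstar"
      using D2[unfolded e1 e2, unfolded mzs xzs] .
    show ?thesis using D1 D2' f0 fxw by simp
  qed
  moreover have "f x \<le> max (f x) (f z)" "f z \<le> max (f x) (f z)" by simp_all
  ultimately show ?thesis
    unfolding zs_def[symmetric]
    using k1 k2 g1 g2 fizs
      ring_distribs(1)[of "\<mu>/8" "(norm (x - xstar))\<^sup>2" "(norm (z - zs))\<^sup>2"]
      mult.assoc[of "\<mu>" "1/8"]
    by (simp add: field_simps)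
qed

end
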